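(* In an instance of the large-market pricing problem described in the context, let $\vec x^1,\vec x^2$ be buyer demand vectors with $\vec x^2\ge\vec x^1$ componentwise, and let $\vec z^1,\vec z^2$ be min-cost flows for $\vec x^1,\vec x^2$ respectively. Then $$\sum_t\left(C_t(z^2_t)-C_t(z^1_t)\right)\ge\sum_i r_i(\vec z^1)\,(x^2_i-x^1_i).$$
   Context: Finite item set $S$, finite set $B$ of buyer types, bipartite graph $G=(B\cup S,E)$, $S_i=\{t:(i,t)\in E\}$. Item $t$ has convex continuously differentiable production cost $C_t$ with derivative $c_t$. A feasible allocation for demand vector $\vec x$ (indexed by $B$, nonnegative) is $z_t(i)\ge0$ with $z_t(i)>0$ only if $(i,t)\in E$ and $\sum_tz_t(i)=x_i$; $z_t=\sum_iz_t(i)$. A min-cost flow for $\vec x$ is a feasible allocation minimizing $\sum_tC_t(z_t)$. For a min-cost flow $\vec z$, $r_i(\vec z)=\min_{(i,t)\in E}c_t(z_t)$, which equals the marginal cost of every item buyer type $i$ receives in $\vec z$. *)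

theory Defs
  imports "HOL-Analysis.Analysis"
begin

text \<open>Allocations: z t i is the amount of item t given to buyer type i.\<close>

definition feasible_alloc ::
  "'b set \<Rightarrow> 's set \<Rightarrow> ('b \<times> 's) set \<Rightarrow> ('b \<Rightarrow> real) \<Rightarrow> ('s \<Rightarrow> 'b \<Rightarrow> real) \<Rightarrow> bool" where
  "feasible_alloc B S E x z \<longleftrightarrow>
     (\<forall>i\<in>B. \<forall>t\<in>S. z t i \<ge> 0) \<and>
     (\<forall>i\<in>B. \<forall>t\<in>S. z t i > 0 \<longrightarrow> (i, t) \<in> E) \<and>
     (\<forall>i\<in>B. (\<Sum>t\<in>S. z t i) = x i)"

definition load :: "'b set \<Rightarrow> ('s \<Rightarrow> 'b \<Rightarrow> real) \<Rightarrow> 's \<Rightarrow> real" where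
  "load B z t = (\<Sum>i\<in>B. z t i)"

definition total_cost ::
  "'b set \<Rightarrow> 's set \<Rightarrow> ('s \<Rightarrow> real \<Rightarrow> real) \<Rightarrow> ('s \<Rightarrow> 'b \<Rightarrow> real) \<Rightarrow> real" where
  "total_cost B S C z = (\<Sum>t\<in>S. C t (load B z t))"

definition min_cost_flow ::
  "'b set \<Rightarrow> 's set \<Rightarrow> ('b \<times> 's) set \<Rightarrow> ('s \<Rightarrow> real \<Rightarrow> real) \<Rightarrow> ('b \<Rightarrow> real)
    \<Rightarrow> ('s \<Rightarrow> 'b \<Rightarrow> real) \<Rightarrow> bool" where
  "min_cost_flow B S E C x z \<longleftrightarrow>
     feasible_alloc B S E x z \<and>
     (\<forall>z'. feasible_alloc B S E x z' \<longrightarrow> total_cost B S C z \<le> total_cost B S C z')"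

definition marg_price ::
  "'b set \<Rightarrow> ('b \<times> 's) set \<Rightarrow> ('s \<Rightarrow> real \<Rightarrow> real) \<Rightarrow> ('s \<Rightarrow> 'b \<Rightarrow> real) \<Rightarrow> 'b \<Rightarrow> real" where
  "marg_price B E c z i = Min {c t (load B z t) | t. (i, t) \<in> E}"

end

theory Submission
  imports Defs
begin

lemma tangent0:
  fixes f :: "real \<Rightarrow> real"
  assumes cv: "convex_on {0..} f" and d: "(f has_real_derivative D) (at c within {0..})"
    and c: "c \<ge> 0" and x: "x \<ge> 0"
  shows "f x - f c \<ge> D * (x - c)"
proof (cases "c > 0")
  case True
  have "interior {0::real..} = {0<..}" by simp
  then have "c \<in> interior {0::real..}" using True by simp
  then show ?thesis
    using convex_on_imp_above_tangent[OF cv _ _ _ d] x by auto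
next
  case False
  then have c0: "c = 0" using c by simp
  show ?thesis
  proof (cases "x = 0")
    case True then show ?thesis using c0 by simp
  next
    case False
    then have xp: "x > 0" using x by simp
    show ?thesis
    proof (rule ccontr)
      assume "\<not> ?thesis"
      then have lt: "f x - f 0 < D * x" using c0 by simp
      define k where "k = (f x - f 0) / x"
      have kD: "k < D" using lt xp unfolding k_def by (simp add: divide_less_eq mult.commute)
      have dg: "((\<lambda>y. f y - k * y) has_real_derivative (D - k)) (at 0 within {0..})"
        using d c0 by (auto intro!: derivative_eq_intros)
      obtain e where e: "e > 0" "\<And>h. h > 0 \<Longrightarrow> 0 + h \<in> {0..} \<Longrightarrow> h < e \<Longrightarrow> f 0 - k * 0 < f (0 + h) - k * (0 + h)"
        using has_real_derivative_pos_inc_right[OF dg] kD by force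
      define h where "h = min (e/2) x"
      have h: "h > 0" "h < e" "h \<le> x" using e xp unfolding h_def by auto
      have "f ((1 - h/x) *\<^sub>R 0 + (h/x) *\<^sub>R x) \<le> (1 - h/x) * f 0 + (h/x) * f x"
        by (rule convex_onD[OF cv]) (use h xp in auto)
      then have "f h \<le> (1 - h/x) * f 0 + (h/x) * f x" using xp by simp
      also have "\<dots> = f 0 + k * h" unfolding k_def using xp by (simp add: field_simps)
      finally show False using e(2)[of h] h by simp
    qed
  qed
qed


lemma kkt:
  fixes B :: "'b set" and S :: "'s set" and E :: "('b \<times> 's) set"
    and C c :: "'s \<Rightarrow> real \<Rightarrow> real" and x :: "'b \<Rightarrow> real" and z :: "'s \<Rightarrow> 'b \<Rightarrow> real"
  assumes fB: "finite B" and fS: "finite S" and ES: "E \<subseteq> B \<times> S"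
    and der: "\<forall>t\<in>S. \<forall>u\<ge>0. (C t has_real_derivative c t u) (at u within {0..})"
    and mcf: "min_cost_flow B S E C x z"
    and i: "i \<in> B" and t: "t \<in> S" and t': "t' \<in> S" and pos: "z t i > 0" and e: "(i, t') \<in> E"
  shows "c t (load B z t) \<le> c t' (load B z t')"
proof (rule ccontr)
  assume "\<not> ?thesis"
  then have lt: "c t' (load B z t') < c t (load B z t)" by simp
  then have ne: "t \<noteq> t'" by auto
  have fe: "feasible_alloc B S E x z" and opt: "\<And>z'. feasible_alloc B S E x z' \<Longrightarrow> total_cost B S C z \<le> total_cost B S C z'"
    using mcf unfolding min_cost_flow_def by auto
  have nn: "\<And>j s. j \<in> B \<Longrightarrow> s \<in> S \<Longrightarrow> z s j \<ge> 0" using fe unfolding feasible_alloc_def by auto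
  define L where "L = load B z t"
  define L' where "L' = load B z t'"
  have Lge: "L \<ge> z t i"
    unfolding L_def load_def using fB i nn t
    by (metis (no_types, lifting) sum_nonneg_leq_bound order_refl)
  have L'ge: "L' \<ge> 0" unfolding L'_def load_def using nn t' by (simp add: sum_nonneg)
  define zz where "zz = (\<lambda>e::real. \<lambda>s j. z s j + (if j = i \<and> s = t' then e else 0) - (if j = i \<and> s = t then e else 0))"
  have feas: "feasible_alloc B S E x (zz e)" if e0: "0 \<le> e" "e \<le> z t i" for e
    unfolding feasible_alloc_def
  proof (intro conjI ballI impI)
    fix j s assume j: "j \<in> B" and s: "s \<in> S"
    show "0 \<le> zz e s j" using nn[OF j s] e0 ne unfolding zz_def by auto
    show "(j, s) \<in> E" if "0 < zz e s j"
      using that fe j s e ne e0 unfolding zz_def feasible_alloc_def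
      by (auto split: if_splits)
  next
    fix j assume j: "j \<in> B"
    have "(\<Sum>s\<in>S. zz e s j) = (\<Sum>s\<in>S. z s j) + (\<Sum>s\<in>S. if j = i \<and> s = t' then e else 0) - (\<Sum>s\<in>S. if j = i \<and> s = t then e else 0)"
      unfolding zz_def by (simp add: sum.distrib sum_subtractf)
    also have "\<dots> = (\<Sum>s\<in>S. z s j)"
      using fS t t' by (cases "j = i") auto
    also have "\<dots> = x j" using fe j unfolding feasible_alloc_def by auto
    finally show "(\<Sum>s\<in>S. zz e s j) = x j" .
  qed
  have ld: "load B (zz e) s = load B z s + (if s = t' then e else 0) - (if s = t then e else 0)" for e s
  proof -
    have "load B (zz e) s = load B z s + (\<Sum>j\<in>B. if j = i \<and> s = t' then e else 0) - (\<Sum>j\<in>B. if j = i \<and> s = t then e else 0)"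
      unfolding zz_def load_def by (simp add: sum.distrib sum_subtractf)
    also have "\<dots> = load B z s + (if s = t' then e else 0) - (if s = t then e else 0)"
      using fB i by auto
    finally show ?thesis .
  qed
  have tc: "total_cost B S C (zz e) - total_cost B S C z = (C t (L - e) - C t L) + (C t' (L' + e) - C t' L')" for e
  proof -
    have "total_cost B S C (zz e) - total_cost B S C z = (\<Sum>s\<in>S. C s (load B (zz e) s) - C s (load B z s))"
      unfolding total_cost_def by (simp add: sum_subtractf)
    also have "\<dots> = (\<Sum>s\<in>S. (if s = t then C t (L - e) - C t L else 0) + (if s = t' then C t' (L' + e) - C t' L' else 0))"
      by (rule sum.cong) (use ne in \<open>auto simp: ld L_def L'_def\<close>)
    also have "\<dots> = (C t (L - e) - C t L) + (C t' (L' + e) - C t' L')"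
      using fS t t' by (simp add: sum.distrib)
    finally show ?thesis .
  qed
  define phi where "phi = (\<lambda>e. C t (L - e) + C t' (L' + e))"
  have phige: "phi e \<ge> phi 0" if "0 \<le> e" "e \<le> z t i" for e
    using opt[OF feas[OF that]] tc[of e] unfolding phi_def by simp
  have Lpos: "L > 0" using Lge pos by simp
  have d1: "(C t has_real_derivative c t L) (at L)"
  proof -
    have "(C t has_real_derivative c t L) (at L within {0..})" using der t Lpos by auto
    moreover have "L \<in> interior {0::real..}" using Lpos by simp
    ultimately show ?thesis using at_within_interior by metis
  qed
  have d2: "(C t' has_real_derivative c t' L') (at L' within {0..})" using der t' L'ge by auto
  have d1': "((\<lambda>e. C t (L - e)) has_real_derivative (c t L * (-1))) (at 0 within {0..})"
  proof -
    have "((C t \<circ> (\<lambda>e. L - e)) has_real_derivative (c t L * (-1))) (at 0)"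
      by (rule DERIV_chain) (use d1 in \<open>auto intro!: derivative_eq_intros\<close>)
    then show ?thesis by (auto simp: o_def intro: has_field_derivative_at_within)
  qed
  have d2': "((\<lambda>e. C t' (L' + e)) has_real_derivative (c t' L' * 1)) (at 0 within {0..})"
  proof -
    have sub: "(\<lambda>e. L' + e) ` {0..} \<subseteq> {0..}" using L'ge by auto
    have "((C t' \<circ> (\<lambda>e. L' + e)) has_real_derivative (c t' L' * 1)) (at 0 within {0..})"
      by (rule DERIV_image_chain) (use has_field_derivative_subset[OF d2 sub] in \<open>auto intro!: derivative_eq_intros\<close>)
    then show ?thesis by (simp add: o_def)
  qed
  have dphi: "(phi has_real_derivative (c t' L' - c t L)) (at 0 within {0..})"
    using DERIV_add[OF d1' d2'] unfolding phi_def by simp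
  have neg: "c t' L' - c t L < 0" using lt unfolding L_def L'_def by simp
  obtain d where d: "d > 0" "\<And>h. h > 0 \<Longrightarrow> 0 + h \<in> {0..} \<Longrightarrow> h < d \<Longrightarrow> phi 0 > phi (0 + h)"
    using has_real_derivative_neg_dec_right[OF dphi neg] by blast
  define h where "h = min (d/2) (z t i)"
  have h: "h > 0" "h < d" "h \<le> z t i" using d pos unfolding h_def by auto
  show False using d(2)[of h] h phige[of h] by simp
qed

theorem lemma13:
  fixes B :: "'b set" and S :: "'s set" and E :: "('b \<times> 's) set"
    and C c :: "'s \<Rightarrow> real \<Rightarrow> real"
    and x1 x2 :: "'b \<Rightarrow> real" and z1 z2 :: "'s \<Rightarrow> 'b \<Rightarrow> real"
  assumes "finite B" and "finite S" and "E \<subseteq> B \<times> S"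
    and "\<forall>t\<in>S. convex_on {0..} (C t)"
    and "\<forall>t\<in>S. \<forall>u\<ge>0. (C t has_real_derivative c t u) (at u within {0..})"
    and "\<forall>t\<in>S. continuous_on {0..} (c t)"
    and "\<forall>i\<in>B. 0 \<le> x1 i" and "\<forall>i\<in>B. x1 i \<le> x2 i"
    and "min_cost_flow B S E C x1 z1" and "min_cost_flow B S E C x2 z2"
  shows "(\<Sum>t\<in>S. C t (load B z2 t) - C t (load B z1 t))
           \<ge> (\<Sum>i\<in>B. marg_price B E c z1 i * (x2 i - x1 i))"
proof -
  note fB = assms(1) and fS = assms(2) and ES = assms(3) and cv = assms(4) and der = assms(5)
  have fe1: "feasible_alloc B S E x1 z1" and fe2: "feasible_alloc B S E x2 z2"
    using assms(9,10) unfolding min_cost_flow_def by auto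
  define p where "p t = c t (load B z1 t)" for t
  define r where "r i = marg_price B E c z1 i" for i
  have nn1: "\<And>j s. j \<in> B \<Longrightarrow> s \<in> S \<Longrightarrow> z1 s j \<ge> 0" using fe1 unfolding feasible_alloc_def by auto
  have nn2: "\<And>j s. j \<in> B \<Longrightarrow> s \<in> S \<Longrightarrow> z2 s j \<ge> 0" using fe2 unfolding feasible_alloc_def by auto
  have ld1: "\<And>s. s \<in> S \<Longrightarrow> load B z1 s \<ge> 0" unfolding load_def using nn1 by (simp add: sum_nonneg)
  have ld2: "\<And>s. s \<in> S \<Longrightarrow> load B z2 s \<ge> 0" unfolding load_def using nn2 by (simp add: sum_nonneg)
  have step1: "C t (load B z2 t) - C t (load B z1 t) \<ge> p t * (load B z2 t - load B z1 t)" if t: "t \<in> S" for t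
    unfolding p_def by (rule tangent0) (use cv der t ld1 ld2 in auto)
  have peri: "(\<Sum>t\<in>S. p t * (z2 t i - z1 t i)) \<ge> r i * (x2 i - x1 i)" if i: "i \<in> B" for i
  proof (cases "\<exists>t. (i, t) \<in> E")
    case False
    have "z1 t i = 0" "z2 t i = 0" if tS: "t \<in> S" for t
    proof -
      have "\<not> z1 t i > 0" using fe1 i tS False unfolding feasible_alloc_def by blast
      then show "z1 t i = 0" using nn1[OF i tS] by linarith
      have "\<not> z2 t i > 0" using fe2 i tS False unfolding feasible_alloc_def by blast
      then show "z2 t i = 0" using nn2[OF i tS] by linarith
    qed
    moreover have "x1 i = (\<Sum>t\<in>S. z1 t i)" "x2 i = (\<Sum>t\<in>S. z2 t i)"
      using fe1 fe2 i unfolding feasible_alloc_def by auto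
    ultimately show ?thesis by simp
  next
    case True
    define R where "R = {c t (load B z1 t) | t. (i, t) \<in> E}"
    have fE: "finite E" using ES fB fS by (meson finite_SigmaI finite_subset)
    have fR: "finite R"
    proof -
      have "R \<subseteq> (\<lambda>t. c t (load B z1 t)) ` S" unfolding R_def using ES by blast
      then show ?thesis using fS finite_subset by blast
    qed
    have neR: "R \<noteq> {}" using True unfolding R_def by auto
    have rR: "r i = Min R" unfolding r_def marg_price_def R_def by simp
    have rle: "r i \<le> p t" if "(i, t) \<in> E" for t
    proof -
      have "p t \<in> R" unfolding R_def p_def using that by blast
      then show ?thesis unfolding rR using Min_le[OF fR] by blast
    qed
    have req: "p t * z1 t i = r i * z1 t i" if t: "t \<in> S" for t
    proof (cases "z1 t i > 0")
      case True
      have et: "(i, t) \<in> E" using fe1 i t True unfolding feasible_alloc_def by auto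
      have "Min R \<in> R" using fR neR by simp
      then obtain t' where t': "(i, t') \<in> E" "Min R = c t' (load B z1 t')" unfolding R_def by auto
      have "t' \<in> S" using t' ES by auto
      then have "p t \<le> r i" unfolding p_def rR t'(2)
        using kkt[OF fB fS ES der assms(9) i t _ True t'(1)] by simp
      then show ?thesis using rle[OF et] by simp
    next
      case False
      then have "z1 t i = 0" using nn1[OF i t] by simp
      then show ?thesis by simp
    qed
    have rle2: "p t * z2 t i \<ge> r i * z2 t i" if t: "t \<in> S" for t
    proof (cases "z2 t i > 0")
      case True
      have et: "(i, t) \<in> E" using fe2 i t True unfolding feasible_alloc_def by auto
      show ?thesis using rle[OF et] True by (simp add: mult_right_mono)
    next
      case False
      then have "z2 t i = 0" using nn2[OF i t] by simp
      then show ?thesis by simp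
    qed
    have x1s: "x1 i = (\<Sum>t\<in>S. z1 t i)" and x2s: "x2 i = (\<Sum>t\<in>S. z2 t i)"
      using fe1 fe2 i unfolding feasible_alloc_def by auto
    have "(\<Sum>t\<in>S. p t * (z2 t i - z1 t i)) = (\<Sum>t\<in>S. p t * z2 t i) - (\<Sum>t\<in>S. p t * z1 t i)"
      by (simp add: right_diff_distrib sum_subtractf)
    also have "(\<Sum>t\<in>S. p t * z1 t i) = (\<Sum>t\<in>S. r i * z1 t i)" using req by (rule sum.cong[OF refl])
    also have "(\<Sum>t\<in>S. p t * z2 t i) \<ge> (\<Sum>t\<in>S. r i * z2 t i)" using rle2 by (simp add: sum_mono)
    ultimately have "(\<Sum>t\<in>S. p t * (z2 t i - z1 t i)) \<ge> (\<Sum>t\<in>S. r i * z2 t i) - (\<Sum>t\<in>S. r i * z1 t i)"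
      by linarith
    also have "(\<Sum>t\<in>S. r i * z2 t i) - (\<Sum>t\<in>S. r i * z1 t i) = r i * (x2 i - x1 i)"
      unfolding x1s x2s by (simp add: sum_distrib_left right_diff_distrib)
    finally show ?thesis .
  qed
  have "(\<Sum>i\<in>B. marg_price B E c z1 i * (x2 i - x1 i)) \<le> (\<Sum>i\<in>B. \<Sum>t\<in>S. p t * (z2 t i - z1 t i))"
    using peri unfolding r_def by (simp add: sum_mono)
  also have "\<dots> = (\<Sum>t\<in>S. p t * (load B z2 t - load B z1 t))"
    unfolding load_def by (subst sum.swap) (simp add: sum_distrib_left sum_subtractf right_diff_distrib)
  also have "\<dots> \<le> (\<Sum>t\<in>S. C t (load B z2 t) - C t (load B z1 t))"
    using step1 by (simp add: sum_mono)
  finally show ?thesis .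
qed

end
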